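(* Let $k\geqslant 1$ be an integer and let $G$ be a chordal graph. Then $G$ is $\mathbf{W_k}$ if and only if there exists a partition of $V(G)$ into simplices such that each simplex of the partition contains at least $k$ simplicial vertices of $G$.
   Context: All graphs are finite and simple. A chordal graph is a graph with no induced cycle of length at least four. A vertex $v$ is simplicial in $G$ if its neighbourhood $N(v)$ induces a complete graph; in that case $N[v]=N(v)\cup\{v\}$ is called a simplex. For a positive integer $k$, a graph $G$ is $\mathbf{W_k}$ if for any $k$ pairwise disjoint independent sets $A_1,\dots,A_k$ of $G$ there exist $k$ pairwise disjoint maximum independent sets $S_1,\dots,S_k$ of $G$ with $A_i\subseteq S_i$ for all $i\in[k]$. *)

theory Defs
  imports Main
begin

definition simple_graph :: "'a set \<Rightarrow> ('a \<Rightarrow> 'a \<Rightarrow> bool) \<Rightarrow> bool" where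
  "simple_graph V E \<longleftrightarrow> finite V \<and> (\<forall>x y. E x y \<longrightarrow> x \<in> V \<and> y \<in> V)
     \<and> (\<forall>x y. E x y \<longrightarrow> E y x) \<and> (\<forall>x. \<not> E x x)"

definition induced_cycle :: "'a set \<Rightarrow> ('a \<Rightarrow> 'a \<Rightarrow> bool) \<Rightarrow> 'a list \<Rightarrow> bool" where
  "induced_cycle V E xs \<longleftrightarrow> distinct xs \<and> set xs \<subseteq> V \<and>
     (\<forall>i < length xs. \<forall>j < length xs.
        E (xs ! i) (xs ! j) \<longleftrightarrow> (j = Suc i mod length xs \<or> i = Suc j mod length xs))"

definition chordal :: "'a set \<Rightarrow> ('a \<Rightarrow> 'a \<Rightarrow> bool) \<Rightarrow> bool" where
  "chordal V E \<longleftrightarrow> \<not> (\<exists>xs. length xs \<ge> 4 \<and> induced_cycle V E xs)"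

definition nbhd :: "'a set \<Rightarrow> ('a \<Rightarrow> 'a \<Rightarrow> bool) \<Rightarrow> 'a \<Rightarrow> 'a set" where
  "nbhd V E v = {u \<in> V. E v u}"

definition clique :: "('a \<Rightarrow> 'a \<Rightarrow> bool) \<Rightarrow> 'a set \<Rightarrow> bool" where
  "clique E C \<longleftrightarrow> (\<forall>x\<in>C. \<forall>y\<in>C. x \<noteq> y \<longrightarrow> E x y)"

definition simplicial :: "'a set \<Rightarrow> ('a \<Rightarrow> 'a \<Rightarrow> bool) \<Rightarrow> 'a \<Rightarrow> bool" where
  "simplicial V E v \<longleftrightarrow> v \<in> V \<and> clique E (nbhd V E v)"

definition simplex :: "'a set \<Rightarrow> ('a \<Rightarrow> 'a \<Rightarrow> bool) \<Rightarrow> 'a set \<Rightarrow> bool" where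
  "simplex V E S \<longleftrightarrow> (\<exists>v. simplicial V E v \<and> S = insert v (nbhd V E v))"

definition independent :: "'a set \<Rightarrow> ('a \<Rightarrow> 'a \<Rightarrow> bool) \<Rightarrow> 'a set \<Rightarrow> bool" where
  "independent V E A \<longleftrightarrow> A \<subseteq> V \<and> (\<forall>x\<in>A. \<forall>y\<in>A. \<not> E x y)"

definition max_independent :: "'a set \<Rightarrow> ('a \<Rightarrow> 'a \<Rightarrow> bool) \<Rightarrow> 'a set \<Rightarrow> bool" where
  "max_independent V E S \<longleftrightarrow> independent V E S \<and>
     (\<forall>T. independent V E T \<longrightarrow> card T \<le> card S)"

text \<open>W_k, with the index set [k] rendered as {0..<k}.\<close>
definition W_k :: "nat \<Rightarrow> 'a set \<Rightarrow> ('a \<Rightarrow> 'a \<Rightarrow> bool) \<Rightarrow> bool" where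
  "W_k k V E \<longleftrightarrow>
    (\<forall>A :: nat \<Rightarrow> 'a set.
       (\<forall>i<k. independent V E (A i)) \<and> (\<forall>i<k. \<forall>j<k. i \<noteq> j \<longrightarrow> A i \<inter> A j = {})
       \<longrightarrow> (\<exists>S :: nat \<Rightarrow> 'a set.
              (\<forall>i<k. max_independent V E (S i) \<and> A i \<subseteq> S i) \<and>
              (\<forall>i<k. \<forall>j<k. i \<noteq> j \<longrightarrow> S i \<inter> S j = {})))"

definition is_partition :: "'a set \<Rightarrow> 'a set set \<Rightarrow> bool" where
  "is_partition V P \<longleftrightarrow> \<Union>P = V \<and> {} \<notin> P \<and>
     (\<forall>X\<in>P. \<forall>Y\<in>P. X \<noteq> Y \<longrightarrow> X \<inter> Y = {})"

end

theory Submission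
  imports Defs
begin

lemma c4_cycle:
  assumes irr: "\<forall>x. \<not> E x x"
    and "a \<in> U" "b \<in> U" "c \<in> U" "d \<in> U"
    and "distinct [a,b,c,d]"
    and e: "E a b" "E b c" "E c d" "E d a" "E b a" "E c b" "E d c" "E a d" 
     and n: "\<not> E a c" "\<not> E b d" "\<not> E c a" "\<not> E d b"
  shows "induced_cycle U E [a,b,c,d]"
  unfolding induced_cycle_def
proof (intro conjI allI impI)
  fix i j assume "i < length [a,b,c,d]" "j < length [a,b,c,d]"
  then have "i = 0 \<or> i = 1 \<or> i = 2 \<or> i = 3" "j = 0 \<or> j = 1 \<or> j = 2 \<or> j = 3" by auto
  moreover have "\<not> E a a" "\<not> E b b" "\<not> E c c" "\<not> E d d" using irr by auto
  ultimately show "E ([a, b, c, d] ! i) ([a, b, c, d] ! j) =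
           (j = Suc i mod length [a, b, c, d] \<or> i = Suc j mod length [a, b, c, d])"
    using e n by (elim disjE; simp)
qed (use assms in auto)

definition wc :: "'a set \<Rightarrow> ('a \<Rightarrow> 'a \<Rightarrow> bool) \<Rightarrow> bool" where
  "wc U E \<longleftrightarrow> (\<forall>A. independent U E A \<longrightarrow> (\<exists>S. max_independent U E S \<and> A \<subseteq> S))"

locale sgraph = fixes E :: "'a \<Rightarrow> 'a \<Rightarrow> bool"
  assumes sym: "E x y \<Longrightarrow> E y x" and irr: "\<not> E x x"
begin

lemma simp_clique: "simplicial U E u \<Longrightarrow> clique E (insert u (nbhd U E u))"
  unfolding simplicial_def clique_def nbhd_def
  by (metis (no_types, lifting) insert_iff mem_Collect_eq sym)

lemma simp_sub:
  assumes "simplicial U E w" "w \<in> insert u (nbhd U E u)" "u \<in> insert w (nbhd U E w)"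
  shows "insert w (nbhd U E w) \<subseteq> insert u (nbhd U E u)"
proof
  fix x assume x: "x \<in> insert w (nbhd U E w)"
  show "x \<in> insert u (nbhd U E u)"
  proof (cases "x = u \<or> x = w \<or> w = u")
    case True then show ?thesis using x assms by auto
  next
    case False
    then have "x \<in> nbhd U E w" "u \<in> nbhd U E w" using x assms by auto
    then have "E x u" using assms False unfolding simplicial_def clique_def by blast
    then show ?thesis using \<open>x \<in> nbhd U E w\<close> sym unfolding nbhd_def by blast
  qed
qed

lemma simp_same:
  assumes "simplicial U E u" "simplicial U E w" "w \<in> insert u (nbhd U E u)"
  shows "insert w (nbhd U E w) = insert u (nbhd U E u)"
proof -
  have "u \<in> insert w (nbhd U E w)" using assms unfolding nbhd_def simplicial_def by (metis insert_iff mem_Collect_eq sym)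
  then show ?thesis using assms simp_sub by (meson subset_antisym)
qed

lemma indep_clique_le1:
  "independent U E A \<Longrightarrow> clique E Q \<Longrightarrow> a \<in> A \<Longrightarrow> a \<in> Q \<Longrightarrow> b \<in> A \<Longrightarrow> b \<in> Q \<Longrightarrow> a = b"
  unfolding independent_def clique_def by blast

lemma chordal_subset: "chordal V E \<Longrightarrow> U \<subseteq> V \<Longrightarrow> chordal U E"
  unfolding chordal_def induced_cycle_def by blast

lemma no_c4:
  assumes "chordal U E" "a \<in> U" "b \<in> U" "c \<in> U" "d \<in> U"
    and "distinct [a,b,c,d]"
    and "E a b" "E b c" "E c d" "E d a" "\<not> E a c" "\<not> E b d"
  shows False
proof -
  have "induced_cycle U E [a,b,c,d]"
    using assms irr sym[of a b] sym[of b c] sym[of c d] sym[of d a] sym[of c a] sym[of d b] by (intro c4_cycle) auto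
  then show False using assms(1) unfolding chordal_def by force
qed

lemma max_is_maximal:
  assumes "finite U" "max_independent U E S" "x \<in> U" "x \<notin> S"
  shows "\<exists>y\<in>S. E x y"
proof (rule ccontr)
  assume "\<not> ?thesis"
  then have "\<forall>y\<in>S. \<not> E y x" "\<forall>y\<in>S. \<not> E x y" by (metis sym)+
  then have "independent U E (insert x S)" using assms irr
    unfolding max_independent_def independent_def by auto
  then have "card (insert x S) \<le> card S" using assms unfolding max_independent_def by blast
  moreover have "finite S" using assms unfolding max_independent_def independent_def
    using finite_subset by blast
  ultimately show False using assms by simp
qed

lemma maximal_is_max:
  assumes "wc U E" "independent U E K" "\<forall>x\<in>U-K. \<exists>y\<in>K. E x y"
  shows "max_independent U E K"
proof -
  obtain S where S: "max_independent U E S" "K \<subseteq> S" using assms unfolding wc_def by blast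
  have "S = K"
  proof (rule ccontr)
    assume "S \<noteq> K"
    then obtain x where "x \<in> S" "x \<notin> K" using S by blast
    moreover have "x \<in> U" using S \<open>x \<in> S\<close> unfolding max_independent_def independent_def by blast
    ultimately obtain y where "y \<in> K" "E x y" using assms by blast
    then show False using S \<open>x \<in> S\<close> unfolding max_independent_def independent_def by blast
  qed
  then show ?thesis using S by simp
qed

lemma extend_maximal:
  assumes "finite U" "independent U E T"
  shows "\<exists>M. T \<subseteq> M \<and> independent U E M \<and> (\<forall>x\<in>U-M. \<exists>y\<in>M. E x y)"
proof -
  let ?P = "\<lambda>M. T \<subseteq> M \<and> independent U E M"
  have "\<forall>M. ?P M \<longrightarrow> card M < card U + 1"
  proof (intro allI impI)
    fix M assume "?P M"
    then have "M \<subseteq> U" by (simp add: independent_def)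
    then have "card M \<le> card U" using card_mono[OF assms(1)] by blast
    then show "card M < card U + 1" by linarith
  qed
  moreover have "?P T" using assms by simp
  ultimately obtain M where M: "?P M" "\<forall>M'. ?P M' \<longrightarrow> card M' \<le> card M"
    using Lattices_Big.ex_has_greatest_nat[of ?P T card "card U + 1"] by metis
  have "\<forall>x\<in>U-M. \<exists>y\<in>M. E x y"
  proof (rule ccontr)
    assume "\<not> ?thesis"
    then obtain x where x: "x \<in> U" "x \<notin> M" "\<forall>y\<in>M. \<not> E x y" by blast
    then have "\<forall>y\<in>M. \<not> E y x" by (metis sym)+
    then have "?P (insert x M)" using M x irr unfolding independent_def by auto
    then have "card (insert x M) \<le> card M" using M by blast
    moreover have "finite M" using M assms unfolding independent_def using finite_subset by blast
    ultimately show False using x by simp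
  qed
  then show ?thesis using M by blast
qed

end

fun walk :: "('a \<Rightarrow> 'a \<Rightarrow> bool) \<Rightarrow> 'a list \<Rightarrow> bool" where
  "walk E [] = True"
| "walk E [x] = True"
| "walk E (x # y # xs) = (E x y \<and> walk E (y # xs))"

lemma walk_Cons: "walk E (x # xs) \<longleftrightarrow> walk E xs \<and> (xs \<noteq> [] \<longrightarrow> E x (hd xs))"
  by (cases xs) auto

lemma walk_append:
  "walk E (xs @ ys) \<longleftrightarrow> walk E xs \<and> walk E ys \<and> (xs \<noteq> [] \<and> ys \<noteq> [] \<longrightarrow> E (last xs) (hd ys))"
  by (induction xs) (auto simp: walk_Cons)

lemma walk_nth: "walk E xs \<Longrightarrow> Suc i < length xs \<Longrightarrow> E (xs ! i) (xs ! Suc i)"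
proof (induction xs arbitrary: i)
  case Nil then show ?case by simp
next
  case (Cons a xs)
  show ?case
  proof (cases i)
    case 0
    then show ?thesis using Cons.prems by (cases xs) auto
  next
    case (Suc k)
    then show ?thesis using Cons by (auto simp: walk_Cons)
  qed
qed

lemma walk_take: "walk E xs \<Longrightarrow> walk E (take n xs)"
  by (metis append_take_drop_id walk_append)

lemma walk_drop: "walk E xs \<Longrightarrow> walk E (drop n xs)"
  by (metis append_take_drop_id walk_append)

lemma last_take_Suc: "i < length xs \<Longrightarrow> last (take (Suc i) xs) = xs ! i"
  by (simp add: take_Suc_conv_app_nth)

lemma mod_Suc_less: "a < L \<Longrightarrow> Suc a mod L = (if Suc a = L then 0 else Suc a)"
  by (simp add: mod_Suc)

context sgraph begin

lemma shortcut:
  assumes w: "walk E q" and ij: "i < j" "j < length q" "Suc i < j"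
    and c: "q ! i = q ! j \<or> E (q ! i) (q ! j)"
  shows "\<exists>q'. length q' < length q \<and> walk E q' \<and> q' \<noteq> [] \<and> hd q' = hd q \<and> last q' = last q
            \<and> set q' \<subseteq> set q"
proof (cases "E (q ! i) (q ! j)")
  case True
  define q' where "q' = take (Suc i) q @ drop j q"
  have "walk E q'" unfolding q'_def walk_append
    using w walk_take[OF w] walk_drop[OF w] True ij by (simp add: last_take_Suc hd_drop_conv_nth)
  moreover have "length q' < length q" unfolding q'_def using ij by simp
  moreover have "hd q' = hd q"
  proof -
    have "take (Suc i) q \<noteq> []" using ij by (cases q) auto
    then show ?thesis unfolding q'_def by (simp add: hd_append2)
  qed
  moreover have "last q' = last q"
  proof -
    have "drop j q \<noteq> []" using ij(2) by simp
    then have "last q' = last (drop j q)" unfolding q'_def by (rule last_appendR)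
    also have "\<dots> = last q" using ij(2) by (rule last_drop)
    finally show ?thesis .
  qed
  moreover have "set q' \<subseteq> set q" unfolding q'_def
    by (auto dest: in_set_takeD in_set_dropD)
  moreover have "q' \<noteq> []" unfolding q'_def using ij by (cases q) auto
  ultimately show ?thesis by blast
next
  case False
  then have eq: "q ! i = q ! j" using c by simp
  define q' where "q' = take (Suc i) q @ drop (Suc j) q"
  have "walk E q'"
  proof (cases "Suc j < length q")
    case True
    then have "E (q ! j) (q ! Suc j)" using walk_nth w by blast
    then show ?thesis unfolding q'_def walk_append
      using w walk_take[OF w] walk_drop[OF w] True ij eq by (simp add: last_take_Suc hd_drop_conv_nth)
  next
    case False
    then show ?thesis unfolding q'_def walk_append using walk_take[OF w] by simp
  qed
  moreover have "length q' < length q" unfolding q'_def using ij by simp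
  moreover have "hd q' = hd q"
  proof -
    have "take (Suc i) q \<noteq> []" using ij by (cases q) auto
    then show ?thesis unfolding q'_def by (simp add: hd_append2)
  qed
  moreover have "last q' = last q"
  proof (cases "Suc j < length q")
    case True
    then have "drop (Suc j) q \<noteq> []" by simp
    then have "last q' = last (drop (Suc j) q)" unfolding q'_def by (rule last_appendR)
    also have "\<dots> = last q" using True by (rule last_drop)
    finally show ?thesis .
  next
    case False
    then have "j = length q - 1" using ij by simp
    moreover have "q \<noteq> []" using ij by (cases q) auto
    ultimately have "last q = q ! j" by (simp add: last_conv_nth)
    moreover have "drop (Suc j) q = []" using False by simp
    ultimately show ?thesis unfolding q'_def using ij eq by (simp add: last_take_Suc)
  qed
  moreover have "set q' \<subseteq> set q" unfolding q'_def
    by (auto dest: in_set_takeD in_set_dropD)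
  moreover have "q' \<noteq> []" unfolding q'_def using ij by (cases q) auto
  ultimately show ?thesis by blast
qed

end

context sgraph begin

lemma induced_from_path:
  assumes w: "walk E q" and n3: "3 \<le> length q"
    and nosc: "\<forall>i j. i < j \<longrightarrow> j < length q \<longrightarrow> Suc i < j \<longrightarrow> q ! i \<noteq> q ! j \<and> \<not> E (q ! i) (q ! j)"
    and apex: "\<forall>k < length q. E v (q ! k) \<longleftrightarrow> k = 0 \<or> k = length q - 1"
    and vq: "v \<notin> set q" and sub: "insert v (set q) \<subseteq> U"
  shows "induced_cycle U E (v # q)"
proof -
  let ?n = "length q"
  have qne: "q \<noteq> []" using n3 by (cases q) auto
  have F1: "E (q ! i) (q ! j) \<longleftrightarrow> j = Suc i \<or> i = Suc j" if "i < ?n" "j < ?n" for i j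
  proof (cases "j = Suc i")
    case True then show ?thesis using walk_nth[OF w] that by simp
  next
    case ne1: False
    show ?thesis
    proof (cases "i = Suc j")
      case True then show ?thesis using walk_nth[OF w] that sym by blast
    next
      case False
      consider "i < j" | "j < i" | "i = j" by linarith
      then show ?thesis
      proof cases
        case 1 then show ?thesis using nosc that ne1 False by auto
      next
        case 2
        then have "\<not> E (q ! j) (q ! i)" using nosc that ne1 False by auto
        then show ?thesis using sym ne1 False by blast
      next
        case 3 then show ?thesis using irr ne1 False by simp
      qed
    qed
  qed
  have dq: "distinct q"
  proof (rule distinct_conv_nth[THEN iffD2], intro allI impI)
    fix i j assume ij: "i < ?n" "j < ?n" "i \<noteq> j"
    show "q ! i \<noteq> q ! j"
    proof
      assume eq: "q ! i = q ! j"
      then have "\<not> E (q ! i) (q ! j)" using irr by simp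
      then have "\<not> (j = Suc i \<or> i = Suc j)" using F1 ij by blast
      then have "Suc i < j \<or> Suc j < i" using ij by linarith
      then show False
      proof
        assume "Suc i < j" then show False using nosc ij eq by auto
      next
        assume "Suc j < i" then show False using nosc[rule_format, of j i] ij eq by auto
      qed
    qed
  qed
  show ?thesis unfolding induced_cycle_def
  proof (intro conjI allI impI)
    show "distinct (v # q)" using dq vq by simp
    show "set (v # q) \<subseteq> U" using sub by simp
    fix a b assume ab: "a < length (v # q)" "b < length (v # q)"
    have L: "length (v # q) = Suc ?n" by simp
    have ma: "Suc a mod Suc ?n = (if a = ?n then 0 else Suc a)" using ab mod_Suc_less[of a "Suc ?n"] by simp
    have mb: "Suc b mod Suc ?n = (if b = ?n then 0 else Suc b)" using ab mod_Suc_less[of b "Suc ?n"] by simp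
    show "E ((v # q) ! a) ((v # q) ! b) \<longleftrightarrow> (b = Suc a mod length (v # q) \<or> a = Suc b mod length (v # q))"
    proof (cases a)
      case 0
      show ?thesis
      proof (cases b)
        case 0 then show ?thesis using \<open>a = 0\<close> irr n3 qne unfolding L ma by simp
      next
        case (Suc b')
        have "b' < ?n" using ab Suc by simp
        then have "E v (q ! b') \<longleftrightarrow> b' = 0 \<or> b' = ?n - 1" using apex by blast
        then show ?thesis using \<open>a = 0\<close> Suc n3 \<open>b' < ?n\<close> using ma mb unfolding L ma mb by auto
      qed
    next
      case (Suc a')
      have a': "a' < ?n" using ab Suc by simp
      show ?thesis
      proof (cases b)
        case 0
        have "E v (q ! a') \<longleftrightarrow> a' = 0 \<or> a' = ?n - 1" using apex a' by blast
        moreover have "E (q ! a') v \<longleftrightarrow> E v (q ! a')" using sym by blast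
        ultimately show ?thesis using Suc 0 n3 a' using ma mb unfolding L ma mb by auto
      next
        case (Suc b')
        have b': "b' < ?n" using ab Suc by simp
        have "E (q ! a') (q ! b') \<longleftrightarrow> b' = Suc a' \<or> a' = Suc b'" using F1 a' b' by blast
        moreover have "(b = Suc a mod Suc ?n \<or> a = Suc b mod Suc ?n) \<longleftrightarrow> (b' = Suc a' \<or> a' = Suc b')"
          unfolding ma mb using \<open>a = Suc a'\<close> Suc a' b' by auto
        ultimately show ?thesis using \<open>a = Suc a'\<close> Suc by simp
      qed
    qed
  qed
qed

end

context sgraph begin

lemma nosc_distinct:
  assumes w: "walk E q"
    and nosc: "\<forall>i j. i < j \<longrightarrow> j < length q \<longrightarrow> Suc i < j \<longrightarrow> q ! i \<noteq> q ! j \<and> \<not> E (q ! i) (q ! j)"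
  shows "distinct q"
proof (rule distinct_conv_nth[THEN iffD2], intro allI impI)
  fix i j assume ij: "i < length q" "j < length q" "i \<noteq> j"
  show "q ! i \<noteq> q ! j"
  proof
    assume eq: "q ! i = q ! j"
    consider "j = Suc i" | "i = Suc j" | "Suc i < j" | "Suc j < i" using ij by linarith
    then show False
    proof cases
      case 1 then show False using walk_nth[OF w, of i] ij eq irr by simp
    next
      case 2 then show False using walk_nth[OF w, of j] ij eq irr by simp
    next
      case 3 then show False using nosc ij eq by auto
    next
      case 4 then show False using nosc[rule_format, of j i] ij eq by auto
    qed
  qed
qed

lemma cycle_from_walk:
  assumes "walk E q" "q \<noteq> []" "hd q = x" "last q = y" "set q \<subseteq> insert x (insert y B)"
    "x \<notin> B" "y \<notin> B" "x \<noteq> y" "\<not> E x y" "E v x" "E v y" "v \<notin> B" "\<forall>b\<in>B. \<not> E v b"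
    "insert v (set q) \<subseteq> U"
  shows "\<exists>cs. 4 \<le> length cs \<and> induced_cycle U E cs"
  using assms
proof (induction "length q" arbitrary: q rule: less_induct)
  case less
  show ?case
  proof (cases "\<exists>i j. i < j \<and> j < length q \<and> Suc i < j \<and> (q ! i = q ! j \<or> E (q ! i) (q ! j))")
    case True
    then obtain i j where ij: "i < j" "j < length q" "Suc i < j" "q ! i = q ! j \<or> E (q ! i) (q ! j)"
      by blast
    obtain q' where q': "length q' < length q" "walk E q'" "q' \<noteq> []" "hd q' = hd q" "last q' = last q"
      "set q' \<subseteq> set q"
      using shortcut[OF less.prems(1) ij] by blast
    show ?thesis
      by (rule less.hyps[OF q'(1) q'(2) q'(3)]) (use q' less.prems in auto)
  next
    case False
    then have nosc: "\<forall>i j. i < j \<longrightarrow> j < length q \<longrightarrow> Suc i < j \<longrightarrow> q ! i \<noteq> q ! j \<and> \<not> E (q ! i) (q ! j)"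
      by blast
    have dq: "distinct q" using nosc_distinct[OF less.prems(1) nosc] .
    let ?n = "length q"
    have h0: "q ! 0 = x" using less.prems(2,3) by (simp add: hd_conv_nth)
    have hl: "q ! (?n - 1) = y" using less.prems(2,4) by (simp add: last_conv_nth)
    have n1: "?n \<ge> 1" using less.prems(2) by (cases q) auto
    have n2: "?n \<noteq> 1" using h0 hl less.prems(8) by auto
    have n3: "?n \<noteq> 2"
    proof
      assume "?n = 2"
      then have "E (q ! 0) (q ! 1)" using walk_nth[OF less.prems(1), of 0] by simp
      then show False using h0 hl \<open>?n = 2\<close> less.prems(9) by simp
    qed
    have n: "3 \<le> ?n" using n1 n2 n3 by linarith
    have apex: "\<forall>k < ?n. E v (q ! k) \<longleftrightarrow> k = 0 \<or> k = ?n - 1"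
    proof (intro allI impI)
      fix k assume k: "k < ?n"
      show "E v (q ! k) \<longleftrightarrow> k = 0 \<or> k = ?n - 1"
      proof (cases "k = 0 \<or> k = ?n - 1")
        case True then show ?thesis using h0 hl less.prems(10,11) by auto
      next
        case False
        have "q ! k \<noteq> q ! 0" using nth_eq_iff_index_eq[OF dq, of k 0] k False by linarith
        moreover have "q ! k \<noteq> q ! (?n - 1)" using nth_eq_iff_index_eq[OF dq, of k "?n - 1"] k False n by linarith
        moreover have "q ! k \<in> set q" using k by simp
        ultimately have "q ! k \<in> B" using less.prems(5) h0 hl by auto
        then show ?thesis using less.prems(13) False by auto
      qed
    qed
    have vq: "v \<notin> set q"
    proof
      assume "v \<in> set q"
      then have "v = x \<or> v = y" using less.prems(5,12) by auto
      then show False using less.prems(10,11) irr by auto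
    qed
    have "induced_cycle U E (v # q)"
      by (rule induced_from_path[OF less.prems(1) n nosc apex vq less.prems(14)])
    moreover have "4 \<le> length (v # q)" using n by simp
    ultimately show ?thesis by blast
  qed
qed

end

context sgraph begin

lemma rtranclp_walk:
  assumes "(\<lambda>a c. E a c \<and> a \<in> B \<and> c \<in> B)\<^sup>*\<^sup>* a c" "a \<in> B"
  shows "\<exists>p. walk E p \<and> p \<noteq> [] \<and> hd p = a \<and> last p = c \<and> set p \<subseteq> B"
  using assms(1)
proof (induction rule: rtranclp_induct)
  case base
  then show ?case using assms(2) by (intro exI[of _ "[a]"]) simp
next
  case (step b c)
  then obtain p where p: "walk E p" "p \<noteq> []" "hd p = a" "last p = b" "set p \<subseteq> B" by blast
  have "walk E (p @ [c])" using p step(2) by (simp add: walk_append)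
  moreover have "hd (p @ [c]) = a" using p by (simp add: hd_append2)
  ultimately show ?case using p step(2) by (intro exI[of _ "p @ [c]"]) auto
qed

lemma rtranclp_sym_reach:
  assumes "(\<lambda>a c. E a c \<and> a \<in> B \<and> c \<in> B)\<^sup>*\<^sup>* a c"
  shows "(\<lambda>a c. E a c \<and> a \<in> B \<and> c \<in> B)\<^sup>*\<^sup>* c a"
  using assms
proof (induction rule: rtranclp_induct)
  case base then show ?case by simp
next
  case (step b c)
  then have "E c b \<and> c \<in> B \<and> b \<in> B" using sym by blast
  then show ?case using step(3) by (rule converse_rtranclp_into_rtranclp)
qed

lemma exists_simplicial_far:
  assumes "finite U" "chordal U E" "v \<in> U" "\<exists>x\<in>U. x \<noteq> v \<and> \<not> E v x"
  shows "\<exists>w\<in>U. w \<noteq> v \<and> \<not> E v w \<and> simplicial U E w"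
  using assms
proof (induction "card U" arbitrary: U v rule: less_induct)
  case less
  define B where "B = {x\<in>U. x \<noteq> v \<and> \<not> E v x}"
  obtain b where bB: "b \<in> B" using less.prems(4) unfolding B_def by blast
  define R where "R = (\<lambda>a c. E a c \<and> a \<in> B \<and> c \<in> B)"
  define C where "C = {c. R\<^sup>*\<^sup>* b c}"
  define S where "S = {x\<in>U. E v x \<and> (\<exists>c\<in>C. E x c)}"
  define U' where "U' = C \<union> S"
  have CB: "C \<subseteq> B"
  proof
    fix c assume "c \<in> C"
    then have "R\<^sup>*\<^sup>* b c" unfolding C_def by simp
    then show "c \<in> B"
    proof (cases rule: rtranclp.cases)
      case rtrancl_refl then show ?thesis using bB by simp
    next
      case (rtrancl_into_rtrancl b') then show ?thesis unfolding R_def by simp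
    qed
  qed
  have bC: "b \<in> C" unfolding C_def by simp
  have U'U: "U' \<subseteq> U" using CB unfolding U'_def S_def B_def by auto
  have vU': "v \<notin> U'" using CB irr unfolding U'_def S_def B_def by auto
  have cardU': "card U' < card U"
  proof (rule psubset_card_mono[OF less.prems(1)])
    show "U' \<subset> U" using U'U vU' less.prems(3) by blast
  qed
  have nb: "y \<in> U'" if "c \<in> C" "y \<in> U" "E c y" for c y
  proof (cases "y = v")
    case True
    then have "E v c" using that sym by blast
    then show ?thesis using that CB unfolding B_def by auto
  next
    case False
    show ?thesis
    proof (cases "E v y")
      case True
      then have "y \<in> S" unfolding S_def using that sym by blast
      then show ?thesis unfolding U'_def by simp
    next
      case nE: False
      then have "y \<in> B" unfolding B_def using False that by simp
      then have "R c y" unfolding R_def using that CB by auto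
      then have "R\<^sup>*\<^sup>* b y" using that unfolding C_def by simp
      then show ?thesis unfolding U'_def C_def by simp
    qed
  qed
  have Scl: "E x y" if hx: "x \<in> S" "y \<in> S" "x \<noteq> y" for x y
  proof (rule ccontr)
    assume nxy: "\<not> E x y"
    obtain c1 c2 where c: "c1 \<in> C" "c2 \<in> C" "E x c1" "E y c2" using hx unfolding S_def by blast
    have "R\<^sup>*\<^sup>* b c1" "R\<^sup>*\<^sup>* b c2" using c unfolding C_def by auto
    then have "R\<^sup>*\<^sup>* c1 c2" using rtranclp_sym_reach[of B b c1] unfolding R_def
      by (meson rtranclp_trans)
    then obtain p where p: "walk E p" "p \<noteq> []" "hd p = c1" "last p = c2" "set p \<subseteq> B"
      using rtranclp_walk[of B c1 c2] c CB unfolding R_def by blast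
    define q where "q = x # p @ [y]"
    have "walk E q" unfolding q_def using p c sym by (simp add: walk_append walk_Cons)
    moreover have "q \<noteq> []" "hd q = x" "last q = y" unfolding q_def by simp_all
    moreover have "set q \<subseteq> insert x (insert y B)" unfolding q_def using p by auto
    moreover have "x \<notin> B" "y \<notin> B" "E v x" "E v y" using hx unfolding S_def B_def by auto
    moreover have "v \<notin> B" "\<forall>b\<in>B. \<not> E v b" unfolding B_def by auto
    moreover have "insert v (set q) \<subseteq> U" unfolding q_def using p hx less.prems(3) unfolding S_def B_def by auto
    ultimately obtain cs where "4 \<le> length cs" "induced_cycle U E cs"
      using cycle_from_walk[of q x y B v U] hx nxy by blast
    then show False using less.prems(2) unfolding chordal_def by blast
  qed
  have chU': "chordal U' E" using chordal_subset[OF less.prems(2) U'U] .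
  have finU': "finite U'" using U'U less.prems(1) finite_subset by blast
  have simpC: "simplicial U E w" if "w \<in> C" "simplicial U' E w" for w
  proof -
    have "nbhd U E w = nbhd U' E w" using nb[OF that(1)] U'U unfolding nbhd_def by auto
    then show ?thesis using that U'U unfolding simplicial_def by auto
  qed
  show ?case
  proof (cases "\<forall>x\<in>U'. \<forall>y\<in>U'. x \<noteq> y \<longrightarrow> E x y")
    case True
    have "nbhd U E b \<subseteq> U'" using nb[OF bC] unfolding nbhd_def by auto
    then have "clique E (nbhd U E b)" using True unfolding clique_def by blast
    then have "simplicial U E b" using bB unfolding simplicial_def B_def by simp
    then show ?thesis using bB unfolding B_def by auto
  next
    case False
    then obtain x y where xy: "x \<in> U'" "y \<in> U'" "x \<noteq> y" "\<not> E x y" by blast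
    have "\<exists>x'\<in>U'. x' \<noteq> x \<and> \<not> E x x'"
      by (rule bexI[of _ y]) (use xy in auto)
    from less.hyps[OF cardU' finU' chU' xy(1) this]
    obtain w1 where w1: "w1 \<in> U'" "w1 \<noteq> x" "\<not> E x w1" "simplicial U' E w1" by blast
    have "\<not> E w1 x" using w1(3) sym by blast
    then have "\<exists>x'\<in>U'. x' \<noteq> w1 \<and> \<not> E w1 x'"
      by (intro bexI[of _ x]) (use w1 xy in auto)
    from less.hyps[OF cardU' finU' chU' w1(1) this]
    obtain w2 where w2: "w2 \<in> U'" "w2 \<noteq> w1" "\<not> E w1 w2" "simplicial U' E w2" by blast
    have "\<exists>w. w \<in> C \<and> simplicial U' E w"
    proof (cases "w1 \<in> C")
      case True then show ?thesis using w1 by blast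
    next
      case False
      then have "w1 \<in> S" using w1 unfolding U'_def by blast
      show ?thesis
      proof (cases "w2 \<in> C")
        case True then show ?thesis using w2 by blast
      next
        case False
        then have "w2 \<in> S" using w2 unfolding U'_def by blast
        then have "E w1 w2" using Scl \<open>w1 \<in> S\<close> w2 by metis
        then show ?thesis using w2 by blast
      qed
    qed
    then obtain w where "w \<in> C" "simplicial U' E w" by blast
    then show ?thesis using simpC CB unfolding B_def by blast
  qed
qed

lemma exists_simplicial:
  assumes "finite U" "chordal U E" "U \<noteq> {}"
  shows "\<exists>w. simplicial U E w"
proof (cases "\<forall>x\<in>U. \<forall>y\<in>U. x \<noteq> y \<longrightarrow> E x y")
  case True
  obtain w where "w \<in> U" using assms by blast
  then show ?thesis using True unfolding simplicial_def clique_def nbhd_def by blast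
next
  case False
  then obtain x y where "x \<in> U" "y \<in> U" "x \<noteq> y" "\<not> E x y" by blast
  then show ?thesis using exists_simplicial_far[OF assms(1,2), of x] by metis
qed

end

context sgraph begin

lemma chain_common:
  assumes fin: "finite Q" and ch: "chordal U E" and sub: "Q \<subseteq> U" "W \<subseteq> U"
    and cq: "clique E Q" and cw: "clique E W" and dj: "Q \<inter> W = {}" and ne: "W \<noteq> {}"
    and adj: "\<forall>w\<in>W. \<exists>q\<in>Q. E w q"
  shows "\<exists>q\<in>Q. \<forall>w\<in>W. E w q"
proof -
  let ?f = "\<lambda>w. card {q\<in>Q. E w q}"
  obtain w1 where "w1 \<in> W" using ne by blast
  obtain w0 where w0: "w0 \<in> W" "\<forall>w. w \<in> W \<longrightarrow> ?f w0 \<le> ?f w"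
    using ex_has_least_nat[of "\<lambda>w. w \<in> W" w1 ?f] \<open>w1 \<in> W\<close> by blast
  obtain q where q: "q \<in> Q" "E w0 q" using adj w0 by blast
  have "\<forall>w\<in>W. E w q"
  proof (rule ccontr)
    assume "\<not> ?thesis"
    then obtain w where w: "w \<in> W" "\<not> E w q" by blast
    have wne: "w \<noteq> w0" using w q by blast
    have "\<exists>q'\<in>Q. E w q' \<and> \<not> E w0 q'"
    proof (rule ccontr)
      assume "\<not> ?thesis"
      then have "{q\<in>Q. E w q} \<subseteq> {q\<in>Q. E w0 q} - {q}" using w by blast
      moreover have "{q\<in>Q. E w0 q} - {q} \<subset> {q\<in>Q. E w0 q}" using q by blast
      ultimately have "{q\<in>Q. E w q} \<subset> {q\<in>Q. E w0 q}" by blast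
      then have "?f w < ?f w0" using fin by (simp add: psubset_card_mono)
      moreover have "?f w0 \<le> ?f w" using w0 w by blast
      ultimately show False by linarith
    qed
    then obtain q' where q': "q' \<in> Q" "E w q'" "\<not> E w0 q'" by blast
    have qq: "q \<noteq> q'" using q q' by blast
    have "E q q'" using cq q q' qq unfolding clique_def by blast
    moreover have "E q' w" using q' sym by blast
    moreover have "E w w0" using cw w w0 wne unfolding clique_def by blast
    moreover have "\<not> E q w" using w sym by blast
    moreover have "distinct [w0, q, q', w]" using dj q q' w w0 wne qq by auto
    ultimately show False
      using no_c4[OF ch, of w0 q q' w] q q' w w0 sub by blast
  qed
  then show ?thesis using q by blast
qed

lemma dominate:
  assumes fin: "finite U" and ch: "chordal U E" and CU: "C \<subseteq> U" and cc: "clique E C"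
    and nb: "\<forall>c\<in>C. \<exists>y\<in>U-C. E c y"
  shows "\<exists>T. T \<subseteq> U - C \<and> (\<forall>a\<in>T. \<forall>b\<in>T. \<not> E a b) \<and> (\<forall>c\<in>C. \<exists>t\<in>T. E c t)"
proof -
  let ?P = "\<lambda>T. T \<subseteq> U - C \<and> (\<forall>a\<in>T. \<forall>b\<in>T. \<not> E a b)"
  let ?D = "\<lambda>T. {c\<in>C. \<exists>t\<in>T. E c t}"
  have finC: "finite C" using fin CU finite_subset by blast
  have bnd: "\<forall>T. ?P T \<longrightarrow> card (?D T) < card C + 1"
  proof (intro allI impI)
    fix T
    have "card (?D T) \<le> card C" using finC by (intro card_mono) auto
    then show "card (?D T) < card C + 1" by linarith
  qed
  have P0: "?P {}" by simp
  obtain T where T: "?P T" "\<forall>T'. ?P T' \<longrightarrow> card (?D T') \<le> card (?D T)"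
    using Lattices_Big.ex_has_greatest_nat[of ?P "{}" "\<lambda>T. card (?D T)" "card C + 1", OF P0 bnd] by blast
  have "\<forall>c\<in>C. \<exists>t\<in>T. E c t"
  proof (rule ccontr)
    assume "\<not> ?thesis"
    then obtain c where c: "c \<in> C" "\<forall>t\<in>T. \<not> E c t" by blast
    obtain y where y: "y \<in> U - C" "E c y" using nb c by blast
    define T' where "T' = insert y {t\<in>T. \<not> E y t}"
    have PT': "?P T'"
    proof -
      have "T' \<subseteq> U - C" using T y unfolding T'_def by blast
      moreover have "\<forall>a\<in>T'. \<forall>b\<in>T'. \<not> E a b"
      proof (intro ballI)
        fix a b assume ab: "a \<in> T'" "b \<in> T'"
        show "\<not> E a b"
        proof (cases "a = y")
          case True
          then show ?thesis using ab irr unfolding T'_def by auto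
        next
          case False
          note aF = False
          show ?thesis
          proof (cases "b = y")
            case True
            then have "\<not> E y a" using ab aF unfolding T'_def by auto
            then show ?thesis using True sym by blast
          next
            case False
            then show ?thesis using ab aF T unfolding T'_def by auto
          qed
        qed
      qed
      ultimately show ?thesis by blast
    qed
    have sub: "?D T \<subseteq> ?D T'"
    proof
      fix c' assume "c' \<in> ?D T"
      then obtain t where t: "c' \<in> C" "t \<in> T" "E c' t" by blast
      show "c' \<in> ?D T'"
      proof (cases "E y t")
        case False
        then have "t \<in> T'" unfolding T'_def using t by blast
        then show ?thesis using t by blast
      next
        case True
        have "E c' y"
        proof (rule ccontr)
          assume ncy: "\<not> E c' y"
          have cne: "c' \<noteq> c" using c t by blast
          have tU: "t \<in> U - C" using T t by blast
          have "E t c'" using t sym by blast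
          moreover have "E c' c" using cc c t cne unfolding clique_def by blast
          moreover have "\<not> E c t" using c t by blast
          moreover have "\<not> E y c'" using ncy sym by blast
          moreover have "y \<noteq> t" using True irr by blast
          moreover have "distinct [c, y, t, c']" using c y tU t cne \<open>y \<noteq> t\<close> by auto
          ultimately show False
            using no_c4[OF ch, of c y t c'] c y tU t CU True by blast
        qed
        then show ?thesis unfolding T'_def using t by blast
      qed
    qed
    moreover have "c \<in> ?D T'" "c \<notin> ?D T" using c y unfolding T'_def by auto
    ultimately have "?D T \<subset> ?D T'" by blast
    then have "card (?D T) < card (?D T')" using finC by (intro psubset_card_mono) auto
    moreover have "card (?D T') \<le> card (?D T)" using T(2) PT' by blast
    ultimately show False by linarith
  qed
  then show ?thesis using T by blast
qed

end

context sgraph begin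

lemma simplices_disjoint:
  assumes fin: "finite U" and wcU: "wc U E" and s1: "simplicial U E s1" and s2: "simplicial U E s2"
    and v1: "v \<in> insert s1 (nbhd U E s1)" and v2: "v \<in> insert s2 (nbhd U E s2)"
  shows "insert s1 (nbhd U E s1) = insert s2 (nbhd U E s2)"
proof (cases "s1 \<in> insert s2 (nbhd U E s2)")
  case True
  then show ?thesis using simp_same[OF s2 s1] by simp
next
  case False
  then have ne: "s1 \<noteq> s2" "\<not> E s2 s1" unfolding nbhd_def using s1 unfolding simplicial_def by auto
  have ns: "\<not> E s1 s2" using ne sym by blast
  have vs1: "v \<noteq> s1" using False v2 by blast
  have vs2: "v \<noteq> s2" using v1 ns ne(1) unfolding nbhd_def by auto
  have e1: "E s1 v" "v \<in> U" using v1 vs1 unfolding nbhd_def by auto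
  have e2: "E s2 v" using v2 vs2 unfolding nbhd_def by auto
  have "independent U E {v}" using e1 irr unfolding independent_def by auto
  then obtain S where S: "max_independent U E S" "v \<in> S" using wcU unfolding wc_def by blast
  have SU: "S \<subseteq> U" and Si: "\<forall>x\<in>S. \<forall>y\<in>S. \<not> E x y"
    using S unfolding max_independent_def independent_def by auto
  have finS: "finite S" using SU fin finite_subset by blast
  have s1S: "s1 \<notin> S" using Si S e1 by blast
  have s2S: "s2 \<notin> S" using Si S e2 by blast
  have n1: "\<not> E s1 w" if "w \<in> S" "w \<noteq> v" for w
  proof
    assume "E s1 w"
    then have "w \<in> nbhd U E s1" "v \<in> nbhd U E s1" using that SU e1 unfolding nbhd_def by auto
    then have "E w v" using s1 that unfolding simplicial_def clique_def by blast
    then show False using Si that S by blast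
  qed
  have n2: "\<not> E s2 w" if "w \<in> S" "w \<noteq> v" for w
  proof
    assume "E s2 w"
    then have "w \<in> nbhd U E s2" "v \<in> nbhd U E s2" using that SU e1 e2 unfolding nbhd_def by auto
    then have "E w v" using s2 that unfolding simplicial_def clique_def by blast
    then show False using Si that S by blast
  qed
  define S' where "S' = insert s1 (insert s2 (S - {v}))"
  have "independent U E S'"
    unfolding independent_def S'_def
  proof (intro conjI ballI)
    show "insert s1 (insert s2 (S - {v})) \<subseteq> U" using SU s1 s2 unfolding simplicial_def by auto
    fix x y assume xy: "x \<in> insert s1 (insert s2 (S - {v}))" "y \<in> insert s1 (insert s2 (S - {v}))"
    have n1': "\<not> E w s1" if "w \<in> S" "w \<noteq> v" for w using n1[OF that] sym by blast
    have n2': "\<not> E w s2" if "w \<in> S" "w \<noteq> v" for w using n2[OF that] sym by blast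
    show "\<not> E x y" using xy n1 n2 n1' n2' ns ne(2) irr Si by auto
  qed
  then have "card S' \<le> card S" using S unfolding max_independent_def by blast
  moreover have "card S' = card S + 1"
  proof -
    have "card (S - {v}) = card S - 1" using S finS by simp
    moreover have "card S \<ge> 1" using S finS by (metis card_0_eq empty_iff less_one not_le)
    ultimately show ?thesis unfolding S'_def using finS s1S s2S ne(1) by simp
  qed
  ultimately show ?thesis by simp
qed

end

context sgraph begin

lemma max_card_eq:
  "max_independent U E S \<Longrightarrow> max_independent U E K \<Longrightarrow> card K = card S"
  unfolding max_independent_def by (simp add: le_antisym)

lemma remove_simplex:
  assumes fin: "finite U" and s: "simplicial U E s"
    and S: "max_independent U E S" "s \<in> S"
  shows "max_independent (U - insert s (nbhd U E s)) E (S - {s})"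
proof -
  let ?Q = "insert s (nbhd U E s)"
  let ?U' = "U - ?Q"
  have SU: "S \<subseteq> U" and Si: "\<forall>x\<in>S. \<forall>y\<in>S. \<not> E x y"
    using S unfolding max_independent_def independent_def by auto
  have finS: "finite S" using SU fin finite_subset by blast
  have "S - {s} \<subseteq> ?U'" using SU Si S unfolding nbhd_def by auto
  then have i1: "independent ?U' E (S - {s})" using Si unfolding independent_def by auto
  have "card T \<le> card (S - {s})" if T: "independent ?U' E T" for T
  proof -
    have TU: "T \<subseteq> ?U'" and Ti: "\<forall>x\<in>T. \<forall>y\<in>T. \<not> E x y" using T unfolding independent_def by auto
    have ns: "\<not> E s t" if "t \<in> T" for t using TU that s unfolding nbhd_def simplicial_def by auto
    have ns': "\<not> E t s" if "t \<in> T" for t using ns[OF that] sym by blast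
    have "independent U E (insert s T)" unfolding independent_def
      using TU Ti ns ns' irr s unfolding simplicial_def by auto
    then have "card (insert s T) \<le> card S" using S unfolding max_independent_def by blast
    moreover have "s \<notin> T" using TU by auto
    moreover have "finite T" using TU fin finite_subset by blast
    ultimately show ?thesis using finS S by simp
  qed
  then show ?thesis using i1 unfolding max_independent_def by blast
qed

lemma wc_remove_simplex:
  assumes fin: "finite U" and wcU: "wc U E" and s: "simplicial U E s"
  shows "wc (U - insert s (nbhd U E s)) E"
  unfolding wc_def
proof (intro allI impI)
  let ?Q = "insert s (nbhd U E s)"
  let ?U' = "U - ?Q"
  fix A assume A: "independent ?U' E A"
  have AU: "A \<subseteq> ?U'" and Ai: "\<forall>x\<in>A. \<forall>y\<in>A. \<not> E x y" using A unfolding independent_def by auto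
  have ns: "\<not> E s t" if "t \<in> A" for t using AU that s unfolding nbhd_def simplicial_def by auto
  have ns': "\<not> E t s" if "t \<in> A" for t using ns[OF that] sym by blast
  have "independent U E (insert s A)" unfolding independent_def
    using AU Ai ns ns' irr s unfolding simplicial_def by auto
  then obtain S where S: "max_independent U E S" "insert s A \<subseteq> S" using wcU unfolding wc_def by blast
  then have "max_independent ?U' E (S - {s})" using remove_simplex[OF fin s] by blast
  moreover have "A \<subseteq> S - {s}" using S AU by auto
  ultimately show "\<exists>S. max_independent ?U' E S \<and> A \<subseteq> S" by blast
qed

end

context sgraph begin

lemma lift_claim:
  assumes fin: "finite U" and ch: "chordal U E" and wcU: "wc U E" and s: "simplicial U E s"
    and Qd: "Q = insert s (nbhd U E s)" and U'd: "U' = U - Q"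
    and u: "simplicial U' E u" and Rd: "R = insert u (nbhd U' E u)"
  shows "\<exists>w. simplicial U' E w \<and> w \<in> R \<and> (\<forall>q\<in>Q. \<not> E w q)"
proof (rule ccontr)
  assume H: "\<not> ?thesis"
  define W where "W = {w\<in>R. simplicial U' E w}"
  have QU: "Q \<subseteq> U" using Qd s unfolding nbhd_def simplicial_def by auto
  have U'U: "U' \<subseteq> U" using U'd by auto
  have RU': "R \<subseteq> U'" using Rd u unfolding nbhd_def simplicial_def by auto
  have uW: "u \<in> W" unfolding W_def Rd using u by simp
  have cQ: "clique E Q" using simp_clique[OF s] Qd by simp
  have cR: "clique E R" using simp_clique[OF u] Rd by simp
  have finQ: "finite Q" using QU fin finite_subset by blast
  have WR: "W \<subseteq> R" unfolding W_def by auto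
  have cW: "clique E W" using cR WR unfolding clique_def by blast
  have "\<forall>w\<in>W. \<exists>q\<in>Q. E w q" using H unfolding W_def by blast
  moreover have "Q \<inter> W = {}" using WR RU' U'd by auto
  ultimately obtain q where q: "q \<in> Q" "\<forall>w\<in>W. E w q"
    using chain_common[OF finQ ch QU _ cQ cW] WR RU' U'U uW by blast
  have qU': "q \<notin> U'" using q U'd by auto
  have uq: "E u q" using q uW by blast
  define U'' where "U'' = {x\<in>U'. \<not> E x q}"
  define R'' where "R'' = R \<inter> U''"
  have U''U: "U'' \<subseteq> U" using U'U unfolding U''_def by auto
  have nbR: "\<forall>r\<in>R''. \<exists>z\<in>U''-R''. E r z"
  proof
    fix r assume r: "r \<in> R''"
    then have rR: "r \<in> R" and rU': "r \<in> U'" and rq: "\<not> E r q" unfolding R''_def U''_def by auto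
    have "r \<notin> W" using rq q by blast
    then have ns: "\<not> simplicial U' E r" using rR unfolding W_def by blast
    have "\<exists>z\<in>nbhd U' E r. z \<notin> R"
    proof (rule ccontr)
      assume "\<not> ?thesis"
      then have "nbhd U' E r \<subseteq> R" by blast
      then have "clique E (nbhd U' E r)" using cR unfolding clique_def by blast
      then show False using ns rU' unfolding simplicial_def by blast
    qed
    then obtain z where z: "z \<in> U'" "E r z" "z \<notin> R" unfolding nbhd_def by blast
    have ru: "r \<noteq> u" using rq uq by blast
    have "\<not> E z q"
    proof
      assume zq: "E z q"
      have "E q u" using uq sym by blast
      moreover have "E u r" using rR ru unfolding Rd nbhd_def by auto
      moreover have "\<not> E q r" using rq sym by blast
      moreover have "\<not> E u z" using z unfolding Rd nbhd_def by auto
      moreover have "distinct [q, u, r, z]"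
        using qU' RU' rR z uW WR ru irr by auto
      moreover have "q \<in> U" "u \<in> U" "r \<in> U" "z \<in> U" using q QU RU' U'U rR uW WR z by auto
      ultimately show False using no_c4[OF ch, of q u r z] z zq by blast
    qed
    then have "z \<in> U'' - R''" using z unfolding U''_def R''_def by auto
    then show "\<exists>z\<in>U''-R''. E r z" using z by blast
  qed
  have finU'': "finite U''" using U''U fin finite_subset by blast
  have chU'': "chordal U'' E" using chordal_subset[OF ch U''U] .
  have R''U'': "R'' \<subseteq> U''" unfolding R''_def by auto
  have cR'': "clique E R''" using cR unfolding R''_def clique_def by blast
  obtain T where T: "T \<subseteq> U'' - R''" "\<forall>a\<in>T. \<forall>b\<in>T. \<not> E a b" "\<forall>c\<in>R''. \<exists>t\<in>T. E c t"
    using dominate[OF finU'' chU'' R''U'' cR'' nbR] by blast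
  have "independent U'' E T" using T unfolding independent_def by auto
  then obtain M where M: "T \<subseteq> M" "independent U'' E M" "\<forall>x\<in>U''-M. \<exists>y\<in>M. E x y"
    using extend_maximal[OF finU''] by blast
  have MU'': "M \<subseteq> U''" and Mi: "\<forall>x\<in>M. \<forall>y\<in>M. \<not> E x y" using M unfolding independent_def by auto
  have finM: "finite M" using MU'' finU'' finite_subset by blast
  define K where "K = insert q M"
  have qM: "q \<notin> M" using MU'' qU' unfolding U''_def by auto
  have mq: "\<not> E m q" if "m \<in> M" for m using that MU'' unfolding U''_def by auto
  have qm: "\<not> E q m" if "m \<in> M" for m using mq[OF that] sym by blast
  have Kind: "independent U E K" unfolding independent_def K_def
  proof (intro conjI ballI)
    show "insert q M \<subseteq> U" using q QU MU'' U''U by auto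
    fix x y assume "x \<in> insert q M" "y \<in> insert q M"
    then show "\<not> E x y" using Mi mq qm irr by auto
  qed
  have Kmax: "\<forall>x\<in>U-K. \<exists>y\<in>K. E x y"
  proof
    fix x assume x: "x \<in> U - K"
    show "\<exists>y\<in>K. E x y"
    proof (cases "x \<in> Q")
      case True
      then have "E x q" using cQ q x unfolding clique_def K_def by auto
      then show ?thesis unfolding K_def by blast
    next
      case False
      then have xU': "x \<in> U'" using x U'd by auto
      show ?thesis
      proof (cases "E x q")
        case True then show ?thesis unfolding K_def by blast
      next
        case False
        then have "x \<in> U'' - M" using xU' x unfolding U''_def K_def by auto
        then show ?thesis using M(3) unfolding K_def by blast
      qed
    qed
  qed
  have Kmi: "max_independent U E K" using maximal_is_max[OF wcU Kind Kmax] .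
  have "independent U E {s}" using s irr unfolding independent_def simplicial_def by auto
  then obtain S0 where S0: "max_independent U E S0" "s \<in> S0" using wcU unfolding wc_def by blast
  have S': "max_independent U' E (S0 - {s})" using remove_simplex[OF fin s S0] Qd U'd by simp
  have finS0: "finite S0" using S0 fin unfolding max_independent_def independent_def
    using finite_subset by blast
  have "card K = card S0" using max_card_eq[OF S0(1) Kmi] .
  then have cM: "card M = card (S0 - {s})" using finM qM S0(2) finS0 unfolding K_def by simp
  have MR: "M \<inter> R = {}"
  proof (rule ccontr)
    assume "M \<inter> R \<noteq> {}"
    then obtain m where m: "m \<in> M" "m \<in> R" by blast
    then have "m \<in> R''" using MU'' unfolding R''_def by auto
    then obtain t where "t \<in> T" "E m t" using T by blast
    then show False using Mi m M(1) by blast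
  qed
  have uM: "u \<notin> M" using MR uW WR by blast
  have nu: "\<not> E u m" if "m \<in> M" for m
  proof
    assume "E u m"
    moreover have "m \<in> U'" using that MU'' unfolding U''_def by auto
    ultimately have "m \<in> R" unfolding Rd nbhd_def by auto
    then show False using MR that by blast
  qed
  have nu': "\<not> E m u" if "m \<in> M" for m using nu[OF that] sym by blast
  have "independent U' E (insert u M)" unfolding independent_def
  proof (intro conjI ballI)
    show "insert u M \<subseteq> U'" using MU'' RU' uW WR unfolding U''_def by auto
    fix x y assume "x \<in> insert u M" "y \<in> insert u M"
    then show "\<not> E x y" using Mi nu nu' irr by auto
  qed
  then have "card (insert u M) \<le> card (S0 - {s})" using S' unfolding max_independent_def by blast
  then show False using cM uM finM by simp
qed

lemma every_vertex_simplex: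
  assumes "finite U" "wc U E" "chordal U E"
  shows "\<forall>v\<in>U. \<exists>w. simplicial U E w \<and> v \<in> insert w (nbhd U E w)"
  using assms
proof (induction "card U" arbitrary: U rule: less_induct)
  case less
  show ?case
  proof (cases "U = {}")
    case True then show ?thesis by simp
  next
    case False
    obtain s where s: "simplicial U E s" using exists_simplicial[OF less.prems(1,3) False] by blast
    define Q where "Q = insert s (nbhd U E s)"
    define U' where "U' = U - Q"
    have sU: "s \<in> U" using s unfolding simplicial_def by simp
    have cardU': "card U' < card U"
    proof (rule psubset_card_mono[OF less.prems(1)])
      show "U' \<subset> U" using sU unfolding U'_def Q_def by blast
    qed
    have finU': "finite U'" using less.prems(1) unfolding U'_def by simp
    have wcU': "wc U' E" using wc_remove_simplex[OF less.prems(1,2) s] unfolding U'_def Q_def .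
    have chU': "chordal U' E" using chordal_subset[OF less.prems(3)] unfolding U'_def by blast
    have IH: "\<forall>v\<in>U'. \<exists>w. simplicial U' E w \<and> v \<in> insert w (nbhd U' E w)"
      using less.hyps[OF cardU' finU' wcU' chU'] .
    show ?thesis
    proof
      fix v assume v: "v \<in> U"
      show "\<exists>w. simplicial U E w \<and> v \<in> insert w (nbhd U E w)"
      proof (cases "v \<in> Q")
        case True then show ?thesis using s unfolding Q_def by blast
      next
        case False
        then have "v \<in> U'" using v unfolding U'_def by simp
        then obtain u where u: "simplicial U' E u" "v \<in> insert u (nbhd U' E u)" using IH by blast
        obtain w where w: "simplicial U' E w" "w \<in> insert u (nbhd U' E u)" "\<forall>q\<in>Q. \<not> E w q"
          using lift_claim[OF less.prems(1,3,2) s Q_def U'_def u(1) refl] by blast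
        have eqN: "nbhd U E w = nbhd U' E w" using w(3) unfolding nbhd_def U'_def by auto
        have "simplicial U E w" using w(1) eqN unfolding simplicial_def U'_def by auto
        moreover have "insert w (nbhd U' E w) = insert u (nbhd U' E u)" using simp_same[OF u(1) w(1,2)] .
        ultimately show ?thesis using u(2) eqN by auto
      qed
    qed
  qed
qed

end

lemma Wk_apply:
  assumes "W_k k V E" "\<forall>i<k. independent V E (A i)" "\<forall>i<k. \<forall>j<k. i \<noteq> j \<longrightarrow> A i \<inter> A j = {}"
  shows "\<exists>S. (\<forall>i<k. max_independent V E (S i) \<and> A i \<subseteq> S i) \<and>
              (\<forall>i<k. \<forall>j<k. i \<noteq> j \<longrightarrow> S i \<inter> S j = {})"
proof -
  have "(\<forall>i<k. independent V E (A i)) \<and> (\<forall>i<k. \<forall>j<k. i \<noteq> j \<longrightarrow> A i \<inter> A j = {})"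
    using assms(2,3) by (rule conjI)
  with assms(1)[unfolded W_k_def, THEN spec[of _ A]] show ?thesis by (rule mp)
qed

context sgraph begin

lemma Wk_wc:
  assumes "W_k k V E" "1 \<le> k"
  shows "wc V E"
  unfolding wc_def
proof (intro allI impI)
  fix A assume A: "independent V E A"
  define Af where "Af = (\<lambda>i::nat. if i = 0 then A else {})"
  have "\<forall>i<k. independent V E (Af i)" using A unfolding Af_def independent_def by auto
  moreover have "\<forall>i<k. \<forall>j<k. i \<noteq> j \<longrightarrow> Af i \<inter> Af j = {}"
  proof (intro allI impI)
    fix i j :: nat assume "i \<noteq> j"
    then have "i \<noteq> 0 \<or> j \<noteq> 0" by linarith
    then show "Af i \<inter> Af j = {}" unfolding Af_def by (elim disjE) simp_all
  qed
  ultimately have "\<exists>S. (\<forall>i<k. max_independent V E (S i) \<and> Af i \<subseteq> S i) \<and>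
              (\<forall>i<k. \<forall>j<k. i \<noteq> j \<longrightarrow> S i \<inter> S j = {})"
    by (rule Wk_apply[OF assms(1)])
  then obtain S where "\<forall>i<k. max_independent V E (S i) \<and> Af i \<subseteq> S i" by (elim exE conjE)
  moreover have "0 < k" using assms(2) by linarith
  ultimately have "max_independent V E (S 0) \<and> Af 0 \<subseteq> S 0" by blast
  then have "max_independent V E (S 0) \<and> A \<subseteq> S 0" unfolding Af_def by simp
  then show "\<exists>S. max_independent V E S \<and> A \<subseteq> S" by blast
qed

lemma simplex_card:
  assumes fin: "finite V" and ch: "chordal V E" and Wk: "W_k k V E"
    and Q: "simplex V E Q"
  shows "k \<le> card {v\<in>Q. simplicial V E v}"
proof (rule ccontr)
  assume nk: "\<not> ?thesis"
  define Sim where "Sim = {v\<in>Q. simplicial V E v}"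
  define t where "t = card Sim"
  have tk: "t < k" using nk unfolding t_def Sim_def by linarith
  obtain u where u: "simplicial V E u" "Q = insert u (nbhd V E u)" using Q unfolding simplex_def by blast
  have QV: "Q \<subseteq> V" using u unfolding simplicial_def nbhd_def by auto
  have cQ: "clique E Q" using simp_clique[OF u(1)] u(2) by simp
  define X where "X = Q - Sim"
  define U0 where "U0 = V - Sim"
  have finU0: "finite U0" using fin unfolding U0_def by simp
  have chU0: "chordal U0 E" using chordal_subset[OF ch] unfolding U0_def by blast
  have XU0: "X \<subseteq> U0" using QV unfolding X_def U0_def by auto
  have cX: "clique E X" using cQ unfolding X_def clique_def by blast
  have nbX: "\<forall>x\<in>X. \<exists>y\<in>U0-X. E x y"
  proof
    fix x assume x: "x \<in> X"
    then have xV: "x \<in> V" and xn: "\<not> simplicial V E x" and xQ: "x \<in> Q"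
      using QV unfolding X_def Sim_def by auto
    have "\<exists>y\<in>nbhd V E x. y \<notin> Q"
    proof (rule ccontr)
      assume "\<not> ?thesis"
      then have "nbhd V E x \<subseteq> Q" by blast
      then have "clique E (nbhd V E x)" using cQ unfolding clique_def by blast
      then show False using xn xV unfolding simplicial_def by blast
    qed
    then obtain y where "y \<in> V" "E x y" "y \<notin> Q" unfolding nbhd_def by blast
    moreover have "y \<in> U0 - X" using calculation unfolding U0_def X_def Sim_def by auto
    ultimately show "\<exists>y\<in>U0-X. E x y" by blast
  qed
  obtain T where T: "T \<subseteq> U0 - X" "\<forall>a\<in>T. \<forall>b\<in>T. \<not> E a b" "\<forall>c\<in>X. \<exists>t\<in>T. E c t"
    using dominate[OF finU0 chU0 XU0 cX nbX] by blast
  have TQ: "T \<inter> Q = {}" using T(1) unfolding U0_def X_def Sim_def by auto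
  have TV: "T \<subseteq> V" using T(1) unfolding U0_def by auto
  have finSim: "finite Sim" using QV fin finite_subset unfolding Sim_def by (metis (no_types, lifting) mem_Collect_eq subsetI)
  obtain h where h: "bij_betw h {0..<t} Sim" using ex_bij_betw_nat_finite[OF finSim] unfolding t_def by blast
  have hSim: "h i \<in> Sim" if "i < t" for i using h that unfolding bij_betw_def by auto
  have hinj: "h i = h j \<Longrightarrow> i < t \<Longrightarrow> j < t \<Longrightarrow> i = j" for i j
    using h unfolding bij_betw_def inj_on_def by auto
  define A where "A = (\<lambda>i. if i < t then {h i} else if i = t then T else {})"
  have "\<forall>i<k. independent V E (A i)"
  proof (intro allI impI)
    fix i assume "i < k"
    show "independent V E (A i)"
    proof (cases "i < t")
      case True
      then have "h i \<in> V" using hSim QV unfolding Sim_def by auto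
      then show ?thesis using True irr unfolding A_def independent_def by auto
    next
      case False
      then show ?thesis using TV T(2) unfolding A_def independent_def by auto
    qed
  qed
  moreover have "\<forall>i<k. \<forall>j<k. i \<noteq> j \<longrightarrow> A i \<inter> A j = {}"
  proof (intro allI impI)
    fix i j assume ij: "i < k" "j < k" "i \<noteq> j"
    have hQ: "h m \<in> Q" if "m < t" for m using hSim[OF that] unfolding Sim_def by auto
    show "A i \<inter> A j = {}"
      using ij hinj hQ TQ unfolding A_def by auto
  qed
  ultimately have "\<exists>S. (\<forall>i<k. max_independent V E (S i) \<and> A i \<subseteq> S i) \<and>
              (\<forall>i<k. \<forall>j<k. i \<noteq> j \<longrightarrow> S i \<inter> S j = {})"
    by (rule Wk_apply[OF Wk])
  then obtain S where S: "\<forall>i<k. max_independent V E (S i) \<and> A i \<subseteq> S i"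
    "\<forall>i<k. \<forall>j<k. i \<noteq> j \<longrightarrow> S i \<inter> S j = {}" by (elim exE conjE)
  have St0: "max_independent V E (S t) \<and> A t \<subseteq> S t" using S(1) tk by blast
  have At: "A t = T" unfolding A_def by simp
  have St: "max_independent V E (S t)" "T \<subseteq> S t" using St0 At by auto
  have StV: "S t \<subseteq> V" and Sti: "\<forall>x\<in>S t. \<forall>y\<in>S t. \<not> E x y"
    using St unfolding max_independent_def independent_def by auto
  have "S t \<inter> Q \<noteq> {}"
  proof
    assume SQ: "S t \<inter> Q = {}"
    have uS: "u \<notin> S t" using SQ u by auto
    have nu: "\<not> E u x" if "x \<in> S t" for x using SQ that StV u(2) unfolding nbhd_def by auto
    have nu': "\<not> E x u" if "x \<in> S t" for x using nu[OF that] sym by blast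
    have "independent V E (insert u (S t))" unfolding independent_def
    proof (intro conjI ballI)
      show "insert u (S t) \<subseteq> V" using StV u unfolding simplicial_def by auto
      fix x y assume "x \<in> insert u (S t)" "y \<in> insert u (S t)"
      then show "\<not> E x y" using Sti nu nu' irr by auto
    qed
    then have "card (insert u (S t)) \<le> card (S t)" using St unfolding max_independent_def by blast
    moreover have "finite (S t)" using StV fin finite_subset by blast
    ultimately show False using uS by simp
  qed
  then obtain q where q: "q \<in> S t" "q \<in> Q" by blast
  show False
  proof (cases "q \<in> Sim")
    case False
    then have "q \<in> X" using q unfolding X_def by simp
    then obtain t' where "t' \<in> T" "E q t'" using T(3) by blast
    then show False using Sti q St(2) by blast
  next
    case True
    then obtain i where i: "i < t" "h i = q" using h unfolding bij_betw_def by auto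
    have "i < k" using i tk by linarith
    then have "A i \<subseteq> S i" using S(1) by blast
    moreover have "A i = {q}" using i unfolding A_def by simp
    ultimately have "q \<in> S i" by blast
    moreover have "S i \<inter> S t = {}" using S(2) \<open>i < k\<close> i tk by (metis less_irrefl)
    ultimately show False using q by blast
  qed
qed

lemma Wk_imp_partition:
  assumes fin: "finite V" and ch: "chordal V E" and Wk: "W_k k V E" and k: "1 \<le> k"
  shows "\<exists>P. is_partition V P \<and> (\<forall>S\<in>P. simplex V E S) \<and>
         (\<forall>S\<in>P. card {v\<in>S. simplicial V E v} \<ge> k)"
proof -
  have wcV: "wc V E" using Wk_wc[OF Wk k] .
  define P where "P = {S. simplex V E S}"
  have "\<Union>P = V"
  proof
    show "\<Union>P \<subseteq> V" unfolding P_def simplex_def simplicial_def nbhd_def by auto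
    show "V \<subseteq> \<Union>P"
    proof
      fix v assume "v \<in> V"
      then obtain w where "simplicial V E w" "v \<in> insert w (nbhd V E w)"
        using every_vertex_simplex[OF fin wcV ch] by blast
      then show "v \<in> \<Union>P" unfolding P_def simplex_def by blast
    qed
  qed
  moreover have "{} \<notin> P" unfolding P_def simplex_def by auto
  moreover have "\<forall>X\<in>P. \<forall>Y\<in>P. X \<noteq> Y \<longrightarrow> X \<inter> Y = {}"
  proof (intro ballI impI)
    fix X Y assume XY: "X \<in> P" "Y \<in> P" "X \<noteq> Y"
    obtain a where a: "simplicial V E a" "X = insert a (nbhd V E a)" using XY unfolding P_def simplex_def by blast
    obtain b where b: "simplicial V E b" "Y = insert b (nbhd V E b)" using XY unfolding P_def simplex_def by blast
    show "X \<inter> Y = {}"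
    proof (rule ccontr)
      assume "X \<inter> Y \<noteq> {}"
      then obtain v where "v \<in> X" "v \<in> Y" by blast
      then have "X = Y" using simplices_disjoint[OF fin wcV a(1) b(1)] a b by blast
      then show False using XY by blast
    qed
  qed
  ultimately have "is_partition V P" unfolding is_partition_def by blast
  moreover have "\<forall>S\<in>P. simplex V E S" unfolding P_def by simp
  moreover have "\<forall>S\<in>P. card {v\<in>S. simplicial V E v} \<ge> k"
    using simplex_card[OF fin ch Wk] unfolding P_def by blast
  ultimately show ?thesis by blast
qed

end

lemma count_free:
  fixes Q :: "'a set" and A :: "nat \<Rightarrow> 'a set" and k :: nat
  assumes finQ: "finite Q"
    and le1: "\<forall>i<k. \<forall>a b. a \<in> A i \<inter> Q \<longrightarrow> b \<in> A i \<inter> Q \<longrightarrow> a = b"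
    and kS: "k \<le> card Sim" and SimQ: "Sim \<subseteq> Q"
  shows "card {i\<in>{0..<k}. A i \<inter> Q = {}} \<le> card (Sim - (\<Union>i\<in>{0..<k}. A i))"
proof -
  define J where "J = {i\<in>{0..<k}. A i \<inter> Q = {}}"
  define Mt where "Mt = {i\<in>{0..<k}. A i \<inter> Q \<noteq> {}}"
  have u1: "J \<union> Mt = {0..<k}" and u2: "J \<inter> Mt = {}" unfolding J_def Mt_def by auto
  have fJ: "finite J" and fM: "finite Mt" unfolding J_def Mt_def by auto
  have "card (J \<union> Mt) = card J + card Mt" by (rule card_Un_disjoint[OF fJ fM u2])
  then have JM: "card J + card Mt = k" unfolding u1 by simp
  have finSim: "finite Sim" using finQ SimQ finite_subset by blast
  have sub: "Sim \<inter> (\<Union>i\<in>{0..<k}. A i) \<subseteq> (\<Union>i\<in>Mt. A i \<inter> Q)" using SimQ unfolding Mt_def by blast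
  have finMt: "finite Mt" unfolding Mt_def by simp
  have "card (Sim \<inter> (\<Union>i\<in>{0..<k}. A i)) \<le> card (\<Union>i\<in>Mt. A i \<inter> Q)"
    using sub finMt finQ by (intro card_mono) auto
  also have "\<dots> \<le> (\<Sum>i\<in>Mt. card (A i \<inter> Q))" using card_UN_le[OF finMt] by blast
  also have "\<dots> \<le> of_nat (card Mt) * 1"
  proof (rule sum_bounded_above)
    fix i assume "i \<in> Mt"
    then have "i < k" unfolding Mt_def by simp
    then have "\<forall>a1\<in>A i \<inter> Q. \<forall>a2\<in>A i \<inter> Q. a1 = a2" using le1 by blast
    then show "card (A i \<inter> Q) \<le> 1" using card_le_Suc0_iff_eq[of "A i \<inter> Q"] finQ by simp
  qed
  finally have c1: "card (Sim \<inter> (\<Union>i\<in>{0..<k}. A i)) \<le> card Mt" by simp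
  have "card (Sim - (\<Union>i\<in>{0..<k}. A i)) = card Sim - card (Sim \<inter> (\<Union>i\<in>{0..<k}. A i))"
    using finSim by (intro card_Diff_subset_Int) simp
  then show ?thesis using c1 JM kS unfolding J_def by linarith
qed

context sgraph begin

lemma partition_imp_Wk:
  assumes fin: "finite V" and P: "is_partition V P" and sP: "\<forall>S\<in>P. simplex V E S"
    and cP: "\<forall>S\<in>P. card {v\<in>S. simplicial V E v} \<ge> k"
  shows "W_k k V E"
  unfolding W_k_def
proof (intro allI impI)
  fix A :: "nat \<Rightarrow> 'a set"
  assume "(\<forall>i<k. independent V E (A i)) \<and> (\<forall>i<k. \<forall>j<k. i \<noteq> j \<longrightarrow> A i \<inter> A j = {})"
  then have Ai: "\<forall>i<k. independent V E (A i)" and Ad: "\<forall>i<k. \<forall>j<k. i \<noteq> j \<longrightarrow> A i \<inter> A j = {}"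
    by auto
  have UP: "\<Union>P = V" and PD: "\<forall>X\<in>P. \<forall>Y\<in>P. X \<noteq> Y \<longrightarrow> X \<inter> Y = {}"
    using P unfolding is_partition_def by auto
  have PV: "Q \<subseteq> V" if "Q \<in> P" for Q using UP that by blast
  have finP: "finite P" using fin UP by (metis finite_UnionD)
  have finQ: "finite Q" if "Q \<in> P" for Q using PV[OF that] fin finite_subset by blast
  have cl: "clique E Q" if QP: "Q \<in> P" for Q
  proof -
    obtain u where u: "simplicial V E u" "Q = insert u (nbhd V E u)" using sP QP(1) unfolding simplex_def by blast
    show ?thesis using simp_clique[OF u(1)] u(2) by simp
  qed
  have snb: "nbhd V E w \<subseteq> Q" if QP: "Q \<in> P" "w \<in> Q" "simplicial V E w" for Q w
  proof -
    obtain u where u: "simplicial V E u" "Q = insert u (nbhd V E u)" using sP QP(1) unfolding simplex_def by blast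
    then have "insert w (nbhd V E w) = Q" using simp_same[OF u(1) that(3)] that(2) by simp
    then show ?thesis by blast
  qed
  have le1: "a = b" if "i < k" "a \<in> A i" "a \<in> Q" "b \<in> A i" "b \<in> Q" "Q \<in> P" for i a b Q
    using indep_clique_le1[OF Ai[rule_format, OF that(1)] cl[OF that(6)]] that by blast
  define J where "J = (\<lambda>Q. {i\<in>{0..<k}. A i \<inter> Q = {}})"
  define Z where "Z = (\<lambda>Q. {v\<in>Q. simplicial V E v} - (\<Union>i\<in>{0..<k}. A i))"
  have "\<forall>Q\<in>P. \<exists>f. f ` J Q \<subseteq> Z Q \<and> inj_on f (J Q)"
  proof
    fix Q assume Q: "Q \<in> P"
    have "card (J Q) \<le> card (Z Q)" unfolding J_def Z_def
      by (rule count_free[OF finQ[OF Q]]) (use le1 Q cP in auto)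
    moreover have "finite (J Q)" unfolding J_def by simp
    moreover have "finite (Z Q)" unfolding Z_def using finQ[OF Q] by simp
    ultimately show "\<exists>f. f ` J Q \<subseteq> Z Q \<and> inj_on f (J Q)" using card_le_inj by blast
  qed
  then have "\<exists>F. \<forall>Q\<in>P. F Q ` J Q \<subseteq> Z Q \<and> inj_on (F Q) (J Q)" by (rule bchoice)
  then obtain F where F: "\<forall>Q\<in>P. F Q ` J Q \<subseteq> Z Q \<and> inj_on (F Q) (J Q)" by (elim exE)
  define pick where "pick = (\<lambda>i Q. if A i \<inter> Q \<noteq> {} then (THE a. a \<in> A i \<inter> Q) else F Q i)"
  have pickA: "pick i Q = a" if "i < k" "Q \<in> P" "a \<in> A i" "a \<in> Q" for i Q a
  proof -
    have "(THE a. a \<in> A i \<inter> Q) = a" using le1[OF that(1) _ _ _ _ that(2)] that by (intro the_equality) auto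
    then show ?thesis unfolding pick_def using that by auto
  qed
  have pickZ: "pick i Q \<in> Z Q" if "i < k" "Q \<in> P" "A i \<inter> Q = {}" for i Q
  proof -
    have "i \<in> J Q" unfolding J_def using that by simp
    then show ?thesis unfolding pick_def using F that by auto
  qed
  have pickQ: "pick i Q \<in> Q" if "i < k" "Q \<in> P" for i Q
  proof (cases "A i \<inter> Q = {}")
    case True then show ?thesis using pickZ[OF that True] unfolding Z_def by auto
  next
    case False
    then obtain a where "a \<in> A i" "a \<in> Q" by blast
    then show ?thesis using pickA[OF that] by simp
  qed
  have pickAi: "pick i Q \<in> A i" if H: "i < k" "Q \<in> P" "A i \<inter> Q \<noteq> {}" for i Q
  proof -
    obtain a where "a \<in> A i" "a \<in> Q" using H(3) by blast
    then show ?thesis using pickA[OF H(1,2)] by simp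
  qed
  have AiV: "A i \<subseteq> V" "\<forall>x\<in>A i. \<forall>y\<in>A i. \<not> E x y" if "i < k" for i
    using Ai that unfolding independent_def by auto
  have noedge: "\<not> E (pick i Q) (pick i Q')" if "i < k" "Q \<in> P" "Q' \<in> P" "Q \<noteq> Q'" for i Q Q'
  proof
    assume e: "E (pick i Q) (pick i Q')"
    have dj: "Q \<inter> Q' = {}" using PD that by blast
    have xQ: "pick i Q \<in> Q" "pick i Q' \<in> Q'" using pickQ that by auto
    show False
    proof (cases "A i \<inter> Q' = {}")
      case True
      then have "simplicial V E (pick i Q')" using pickZ[OF that(1,3)] unfolding Z_def by auto
      then have "nbhd V E (pick i Q') \<subseteq> Q'" using snb that xQ by blast
      moreover have "E (pick i Q') (pick i Q)" using e sym by blast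
      moreover have "pick i Q \<in> V" using xQ PV that by blast
      ultimately have "pick i Q \<in> Q'" unfolding nbhd_def by blast
      then show False using dj xQ by blast
    next
      case F': False
      show False
      proof (cases "A i \<inter> Q = {}")
        case True
        then have "simplicial V E (pick i Q)" using pickZ[OF that(1,2)] unfolding Z_def by auto
        then have "nbhd V E (pick i Q) \<subseteq> Q" using snb that xQ by blast
        moreover have "pick i Q' \<in> V" using xQ PV that by blast
        ultimately have "pick i Q' \<in> Q" using e unfolding nbhd_def by blast
        then show False using dj xQ by blast
      next
        case False
        then show False using pickAi[OF that(1,2)] pickAi[OF that(1,3) F'] AiV[OF that(1)] e by blast
      qed
    qed
  qed
  define S where "S = (\<lambda>i. (\<lambda>Q. pick i Q) ` P)"
  have indT: "card T \<le> card P" if "independent V E T" for T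
  proof -
    define g where "g = (\<lambda>v. SOME Q. Q \<in> P \<and> v \<in> Q)"
    have gv: "g v \<in> P \<and> v \<in> g v" if "v \<in> V" for v
      unfolding g_def using UP that by (metis (mono_tags, lifting) UnionE someI_ex)
    have TV: "T \<subseteq> V" using that unfolding independent_def by auto
    have "inj_on g T"
    proof
      fix x y assume xy: "x \<in> T" "y \<in> T" "g x = g y"
      have xV: "x \<in> V" "y \<in> V" using xy TV by auto
      have "x \<in> g x" "g x \<in> P" using gv[OF xV(1)] by auto
      moreover have "y \<in> g x" using gv[OF xV(2)] xy(3) by simp
      ultimately have "x \<in> g x" "y \<in> g x" "g x \<in> P" by auto
      then show "x = y" using indep_clique_le1[OF that cl] xy by blast
    qed
    moreover have "g ` T \<subseteq> P" using gv TV by auto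
    ultimately show ?thesis using card_inj_on_le finP by blast
  qed
  show "\<exists>S. (\<forall>i<k. max_independent V E (S i) \<and> A i \<subseteq> S i) \<and>
              (\<forall>i<k. \<forall>j<k. i \<noteq> j \<longrightarrow> S i \<inter> S j = {})"
  proof (intro exI[of _ S] conjI allI impI)
    fix i assume i: "i < k"
    have SV: "S i \<subseteq> V" unfolding S_def using pickQ[OF i] PV by blast
    have Sind: "\<forall>x\<in>S i. \<forall>y\<in>S i. \<not> E x y"
    proof (intro ballI)
      fix x y assume "x \<in> S i" "y \<in> S i"
      then obtain Q Q' where "Q \<in> P" "Q' \<in> P" "x = pick i Q" "y = pick i Q'" unfolding S_def by blast
      then show "\<not> E x y" using noedge[OF i] irr by (cases "Q = Q'") auto
    qed
    have injp: "inj_on (\<lambda>Q. pick i Q) P"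
    proof
      fix Q Q' assume QQ: "Q \<in> P" "Q' \<in> P" "pick i Q = pick i Q'"
      have "pick i Q \<in> Q \<inter> Q'" using pickQ[OF i QQ(1)] pickQ[OF i QQ(2)] QQ(3) by simp
      then show "Q = Q'" using PD QQ(1,2) by blast
    qed
    have cS: "card (S i) = card P" unfolding S_def using card_image[OF injp] .
    show "max_independent V E (S i)" unfolding max_independent_def
      using SV Sind indT cS unfolding independent_def by auto
    show "A i \<subseteq> S i"
    proof
      fix a assume a: "a \<in> A i"
      then have "a \<in> V" using AiV[OF i] by blast
      then obtain Q where "Q \<in> P" "a \<in> Q" using UP by blast
      then show "a \<in> S i" unfolding S_def using pickA[OF i] a by (metis image_eqI)
    qed
  next
    fix i j assume ij: "i < k" "j < k" "i \<noteq> j"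
    show "S i \<inter> S j = {}"
    proof (rule ccontr)
      assume "S i \<inter> S j \<noteq> {}"
      then obtain Q Q' where QQ: "Q \<in> P" "Q' \<in> P" "pick i Q = pick j Q'" unfolding S_def by blast
      have "pick i Q \<in> Q \<inter> Q'" using pickQ[OF ij(1) QQ(1)] pickQ[OF ij(2) QQ(2)] QQ(3) by simp
      then have "Q = Q'" using PD QQ(1,2) by blast
      then have eq: "pick i Q = pick j Q" using QQ by simp
      have Zn: "z \<notin> A m" if "z \<in> Z Q" "m < k" for z m using that unfolding Z_def by auto
      show False
      proof (cases "A i \<inter> Q = {}")
        case True
        note Ti = True
        show False
        proof (cases "A j \<inter> Q = {}")
          case True
          then have "i \<in> J Q" "j \<in> J Q" using Ti ij unfolding J_def by auto
          then show False using F QQ(1) eq Ti True ij unfolding pick_def inj_on_def by auto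
        next
          case False
          then show False using pickAi[OF ij(2) QQ(1) False] pickZ[OF ij(1) QQ(1) Ti] eq Zn ij by metis
        qed
      next
        case False
        note Fi = False
        show False
        proof (cases "A j \<inter> Q = {}")
          case True
          then show False using pickAi[OF ij(1) QQ(1) Fi] pickZ[OF ij(2) QQ(1) True] eq Zn ij by metis
        next
          case False
          have "A i \<inter> A j = {}" using Ad[rule_format, OF ij] .
          moreover have "pick i Q \<in> A i \<inter> A j" using pickAi[OF ij(1) QQ(1) Fi] pickAi[OF ij(2) QQ(1) False] eq by simp
          ultimately show False by blast
        qed
      qed
    qed
  qed
qed

end

theorem proposition1:
  fixes V :: "'a set" and E :: "'a \<Rightarrow> 'a \<Rightarrow> bool" and k :: nat
  assumes "k \<ge> 1"
    and "simple_graph V E"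
    and "chordal V E"
  shows "W_k k V E \<longleftrightarrow>
    (\<exists>P. is_partition V P \<and> (\<forall>S\<in>P. simplex V E S) \<and>
         (\<forall>S\<in>P. card {v\<in>S. simplicial V E v} \<ge> k))"
proof -
  have sg: "sgraph E"
  proof
    fix x y assume "E x y" then show "E y x" using assms(2) unfolding simple_graph_def by blast
  next
    fix x show "\<not> E x x" using assms(2) unfolding simple_graph_def by blast
  qed
  have fin: "finite V" using assms(2) unfolding simple_graph_def by blast
  show ?thesis
  proof
    assume "W_k k V E"
    then show "\<exists>P. is_partition V P \<and> (\<forall>S\<in>P. simplex V E S) \<and>
         (\<forall>S\<in>P. card {v\<in>S. simplicial V E v} \<ge> k)"
      using sgraph.Wk_imp_partition[OF sg fin assms(3) _ assms(1)] by blast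
  next
    assume "\<exists>P. is_partition V P \<and> (\<forall>S\<in>P. simplex V E S) \<and>
         (\<forall>S\<in>P. card {v\<in>S. simplicial V E v} \<ge> k)"
    then obtain P where P: "is_partition V P" "\<forall>S\<in>P. simplex V E S"
      "\<forall>S\<in>P. card {v\<in>S. simplicial V E v} \<ge> k" by blast
    show "W_k k V E" using sgraph.partition_imp_Wk[OF sg fin P] .
  qed
qed

end
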